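(* Fix $\alpha\in[0,1)$, $\beta\in(0,1)$, $Q=1-\alpha$, $S=1-\beta$. Let $\nu_n^{\alpha,\beta}$ be the stationary law of the combined count chain and, for $0\le k\le n$, $w_{n,k}^{\alpha,\beta}:=\frac{(n)_k}{n^k}Q^kS^{k(k+1)/2}$ (with $(n)_k=n(n-1)\cdots(n-k+1)$, $w_{n,0}^{\alpha,\beta}=1$). There are constants $0<c<C<\infty$ and an integer $M<\infty$, depending only on $\alpha,\beta$, such that for all sufficiently large $n$ and all $M\le k\le n$, $cw_{n,k}^{\alpha,\beta}\le\nu_n^{\alpha,\beta}(k)\le Cw_{n,k}^{\alpha,\beta}$. Moreover $\nu_n^{\alpha,\beta}(n)\sim\frac{1}{(S;S)_\infty}\frac{n!}{n^n}Q^nS^{n(n+1)/2}$.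
   Context: The combined count chain $(K_t)$ on $\{0,\dots,n\}$: given $K_t=k$, with probability $k/n$, $K_{t+1}\sim\mathrm{Bin}(k-1,S)+\mathrm{Bernoulli}(QS)$, and with probability $(n-k)/n$, $K_{t+1}\sim\mathrm{Bin}(k,S)+\mathrm{Bernoulli}(QS)$ (independent summands; the first case is omitted when $k=0$). It is irreducible and aperiodic with unique stationary law $\nu_n^{\alpha,\beta}$. (It counts present types in the collector where each round a uniform type is refreshed to present w.p. $Q$, absent w.p. $\alpha$, then every present coupon is independently retained w.p. $S$.) $(S;S)_\infty:=\prod_{r\ge1}(1-S^r)$. *)

theory Defs
  imports "HOL-Probability.Probability" "HOL-Library.Landau_Symbols"
begin

text \<open>For k = 0 the first case has probability 0.\<close>
definition count_step :: "real \<Rightarrow> real \<Rightarrow> nat \<Rightarrow> nat \<Rightarrow> nat pmf" where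
  "count_step \<alpha> \<beta> n k =
     (let Q = 1 - \<alpha>; S = 1 - \<beta> in
      bind_pmf (bernoulli_pmf (real k / real n))
        (\<lambda>b. map_pmf (\<lambda>(x, y). x + (if y then 1 else 0))
               (pair_pmf (binomial_pmf (if b then k - 1 else k) S)
                         (bernoulli_pmf (Q * S)))))"

definition is_stationary_law :: "real \<Rightarrow> real \<Rightarrow> nat \<Rightarrow> (nat \<Rightarrow> real) \<Rightarrow> bool" where
  "is_stationary_law \<alpha> \<beta> n \<nu> \<longleftrightarrow>
     (\<forall>j\<le>n. 0 \<le> \<nu> j) \<and> (\<Sum>j\<le>n. \<nu> j) = 1 \<and>
     (\<forall>j\<le>n. \<nu> j = (\<Sum>k\<le>n. \<nu> k * pmf (count_step \<alpha> \<beta> n k) j))"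

definition wgt :: "real \<Rightarrow> real \<Rightarrow> nat \<Rightarrow> nat \<Rightarrow> real" where
  "wgt \<alpha> \<beta> n k =
     (\<Prod>i<k. real (n - i)) / real n ^ k * (1 - \<alpha>) ^ k * (1 - \<beta>) ^ (k * (k + 1) div 2)"

definition qpoch_inf :: "real \<Rightarrow> real" where
  "qpoch_inf S = prodinf (\<lambda>r. 1 - S ^ (r + 1))"

end

theory Submission
  imports Defs
begin


lemma binom_moment:
  fixes p :: real
  shows "(\<Sum>x\<le>a. real (a choose x) * p^x * (1-p)^(a-x) * real (x choose m)) = real (a choose m) * p^m"
proof (cases "m \<le> a")
  case False
  then have "\<forall>x\<in>{..a}. real (a choose x) * p^x * (1-p)^(a-x) * real (x choose m) = 0"
    by (auto simp: binomial_eq_0)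
  then show ?thesis using False by (simp add: binomial_eq_0)
next
  case True
  have "(\<Sum>x\<le>a. real (a choose x) * p^x * (1-p)^(a-x) * real (x choose m))
      = (\<Sum>x\<in>{m..a}. real (a choose x) * p^x * (1-p)^(a-x) * real (x choose m))"
    by (rule sum.mono_neutral_right) auto
  also have "\<dots> = (\<Sum>i\<le>a-m. real (a choose (m+i)) * p^(m+i) * (1-p)^(a-(m+i)) * real ((m+i) choose m))"
  proof -
    have "{m..a} = (\<lambda>i. m+i) ` {..a-m}" using True
      apply (auto simp: image_iff)
      subgoal for x by (rule bexI[of _ "x - m"]) auto
      done
    then show ?thesis by (simp add: sum.reindex)
  qed
  also have "\<dots> = (\<Sum>i\<le>a-m. real (a choose m) * p^m * (real ((a-m) choose i) * p^i * (1-p)^(a-m-i)))"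
  proof (rule sum.cong[OF refl])
    fix i assume i: "i \<in> {..a-m}"
    have "(a choose (m+i)) * ((m+i) choose m) = (a choose m) * ((a-m) choose i)"
      using choose_mult[of m "m+i" a] i True by simp
    then have "real (a choose (m+i)) * real ((m+i) choose m) = real (a choose m) * real ((a-m) choose i)"
      by (metis of_nat_mult)
    moreover have "a-(m+i) = a-m-i" by simp
    ultimately show "real (a choose (m+i)) * p^(m+i) * (1-p)^(a-(m+i)) * real ((m+i) choose m) =
       real (a choose m) * p^m * (real ((a-m) choose i) * p^i * (1-p)^(a-m-i))"
      by (simp add: power_add algebra_simps)
  qed
  also have "\<dots> = real (a choose m) * p^m * (\<Sum>i\<le>a-m. real ((a-m) choose i) * p^i * (1-p)^(a-m-i))"
    by (simp only: sum_distrib_left)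
  also have "\<dots> = real (a choose m) * p^m * (p + (1-p))^(a-m)"
    by (simp only: binomial_ring)
  finally show ?thesis by simp
qed


definition gsum :: "nat \<times> bool \<Rightarrow> nat" where "gsum = (\<lambda>(x, y). x + (if y then 1 else 0))"

lemma pair_moment:
  fixes S q :: real
  assumes S: "0 < S" "S < 1" and q: "0 \<le> q" "q \<le> 1" and m: "m \<ge> 1" and an: "a + 1 \<le> n"
  shows "(\<Sum>j\<le>n. pmf (map_pmf gsum (pair_pmf (binomial_pmf a S) (bernoulli_pmf q))) j * real (j choose m))
       = real (a choose m) * S^m + q * (real (a choose (m-1)) * S^(m-1))"
proof -
  let ?B = "binomial_pmf a S" and ?P = "pair_pmf (binomial_pmf a S) (bernoulli_pmf q)"
  have "(\<Sum>j\<le>n. pmf (map_pmf gsum ?P) j * real (j choose m))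
      = measure_pmf.expectation (map_pmf gsum ?P) (\<lambda>j. real (j choose m))"
  proof (subst integral_measure_pmf_real[where A="{..n}"])
    fix j assume "j \<in> set_pmf (map_pmf gsum ?P)"
    then show "j \<in> {..n}" using S an by (auto simp: gsum_def)
  qed (auto simp: mult.commute)
  also have "\<dots> = measure_pmf.expectation ?P (\<lambda>z. real (gsum z choose m))"
    by simp
  also have "\<dots> = (\<Sum>z\<in>{..a} \<times> UNIV. real (gsum z choose m) * pmf ?P z)"
    by (rule integral_measure_pmf_real) (use S in auto)
  also have "\<dots> = (\<Sum>x\<le>a. pmf ?B x * (real (x choose m) + q * real (x choose (m-1))))"
  proof -
    have "(\<Sum>z\<in>{..a} \<times> UNIV. real (gsum z choose m) * pmf ?P z)
        = (\<Sum>x\<le>a. \<Sum>y\<in>UNIV. real (gsum (x,y) choose m) * pmf ?P (x,y))"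
      by (simp add: sum.cartesian_product)
    also have "\<dots> = (\<Sum>x\<le>a. pmf ?B x * (real (x choose m) + q * real (x choose (m-1))))"
    proof (rule sum.cong[OF refl])
      fix x
      obtain m' where m': "m = Suc m'" using m by (cases m) auto
      show "(\<Sum>y\<in>UNIV. real (gsum (x,y) choose m) * pmf ?P (x,y)) = pmf ?B x * (real (x choose m) + q * real (x choose (m-1)))"
        using q by (simp add: UNIV_bool gsum_def pmf_pair m' algebra_simps del: pmf_binomial)
    qed
    finally show ?thesis .
  qed
  also have "\<dots> = (\<Sum>x\<le>a. real (a choose x) * S^x * (1-S)^(a-x) * real (x choose m))
       + q * (\<Sum>x\<le>a. real (a choose x) * S^x * (1-S)^(a-x) * real (x choose (m-1)))"
    using S by (simp add: algebra_simps sum.distrib sum_distrib_left)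
  also have "\<dots> = real (a choose m) * S^m + q * (real (a choose (m-1)) * S^(m-1))"
    by (simp only: binom_moment)
  finally show ?thesis .
qed

lemma comb_id: "real k * real ((k-1) choose r) + (real n - real k) * real (k choose r) = real (k choose r) * (real n - real r)"
proof (cases "r \<le> k")
  case True
  have "(k - r) * (k choose r) = k * ((k-1) choose r)" by (rule binomial_absorb_comp)
  then have "real (k - r) * real (k choose r) = real k * real ((k-1) choose r)"
    by (metis of_nat_mult)
  then have "(real k - real r) * real (k choose r) = real k * real ((k-1) choose r)"
    using True by (simp add: of_nat_diff)
  then show ?thesis by (simp add: algebra_simps)
next
  case False
  then show ?thesis by (simp add: binomial_eq_0)
qed

lemma step_moment:
  assumes n: "n \<ge> 1" "k \<le> n" and ab: "0 \<le> \<alpha>" "\<alpha> < 1" "0 < \<beta>" "\<beta> < 1" and m: "m \<ge> 1"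
  shows "(\<Sum>j\<le>n. pmf (count_step \<alpha> \<beta> n k) j * real (j choose m))
     = (1-\<beta>)^m * ((1 - real m / real n) * real (k choose m)
         + (1-\<alpha>) * (1 - real (m-1) / real n) * real (k choose (m-1)))"
proof -
  define S where "S = 1 - \<beta>"
  define Q where "Q = 1 - \<alpha>"
  define A where "A b = map_pmf gsum (pair_pmf (binomial_pmf (if b then k-1 else k) S) (bernoulli_pmf (Q*S)))" for b
  have S: "0 < S" "S < 1" using ab by (auto simp: S_def)
  have Q: "0 < Q" "Q \<le> 1" using ab by (auto simp: Q_def)
  have QS: "0 \<le> Q*S" "Q*S \<le> 1" using S Q by (auto simp: mult_le_one)
  have cs: "count_step \<alpha> \<beta> n k = bind_pmf (bernoulli_pmf (real k/real n)) A"
    unfolding count_step_def Let_def A_def[abs_def] gsum_def S_def Q_def by simp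
  have p: "0 \<le> real k / real n" "real k / real n \<le> 1" using n by auto
  have pm: "pmf (count_step \<alpha> \<beta> n k) j = pmf (A True) j * (real k / real n) + pmf (A False) j * (1 - real k / real n)" for j
    using p by (simp add: cs pmf_bind)
  have T: "(\<Sum>j\<le>n. pmf (A True) j * real (j choose m)) = real ((k-1) choose m) * S^m + Q*S * (real ((k-1) choose (m-1)) * S^(m-1))"
    unfolding A_def using pair_moment[OF S QS m, of "k-1" n] n by simp
  have F: "(1 - real k / real n) * (\<Sum>j\<le>n. pmf (A False) j * real (j choose m)) = (1 - real k / real n) * (real (k choose m) * S^m + Q*S * (real (k choose (m-1)) * S^(m-1)))"
  proof (cases "k < n")
    case True
    then show ?thesis unfolding A_def using pair_moment[OF S QS m, of "k" n] by simp
  next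
    case False
    then show ?thesis using n by simp
  qed
  have SS: "S * S^(m-1) = S^m" using m by (cases m) auto
  have e1: "real k * real ((k-1) choose m) + (real n - real k) * real (k choose m) = real (k choose m) * (real n - real m)"
    by (rule comb_id)
  have e2: "real k * real ((k-1) choose (m-1)) + (real n - real k) * real (k choose (m-1)) = real (k choose (m-1)) * (real n - real (m-1))"
    by (rule comb_id)
  have nz: "real n > 0" using n by simp
  have "(\<Sum>j\<le>n. pmf (count_step \<alpha> \<beta> n k) j * real (j choose m))
      = (real k / real n) * (\<Sum>j\<le>n. pmf (A True) j * real (j choose m))
        + (1 - real k / real n) * (\<Sum>j\<le>n. pmf (A False) j * real (j choose m))"
  proof -
    have "(\<Sum>j\<le>n. pmf (count_step \<alpha> \<beta> n k) j * real (j choose m))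
      = (\<Sum>j\<le>n. (real k / real n) * (pmf (A True) j * real (j choose m)) + (1 - real k / real n) * (pmf (A False) j * real (j choose m)))"
      by (rule sum.cong) (simp_all add: pm algebra_simps)
    then show ?thesis by (simp add: sum.distrib sum_distrib_left)
  qed
  also have "\<dots> = (real k / real n) * (real ((k-1) choose m) * S^m + Q * (real ((k-1) choose (m-1)) * S^m))
        + (1 - real k / real n) * (real (k choose m) * S^m + Q * (real (k choose (m-1)) * S^m))"
    unfolding T F by (simp add: SS[symmetric] algebra_simps)
  also have "\<dots> = S^m / real n * (real k * real ((k-1) choose m) + (real n - real k) * real (k choose m))
       + Q * S^m / real n * (real k * real ((k-1) choose (m-1)) + (real n - real k) * real (k choose (m-1)))"
    using nz by (simp add: field_simps)
  also have "\<dots> = S^m / real n * (real (k choose m) * (real n - real m))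
       + Q * S^m / real n * (real (k choose (m-1)) * (real n - real (m-1)))"
    by (simp only: e1 e2)
  also have "\<dots> = S^m * ((1 - real m / real n) * real (k choose m)
         + Q * (1 - real (m-1) / real n) * real (k choose (m-1)))"
    using nz by (simp add: field_simps)
  finally show ?thesis by (simp add: S_def Q_def)
qed



definition hm :: "(nat \<Rightarrow> real) \<Rightarrow> nat \<Rightarrow> nat \<Rightarrow> real" where
  "hm v n m = (\<Sum>j\<le>n. v j * real (j choose m))"

lemma lin_sum: "(\<Sum>k\<in>K. v k * (s * (a * f k + b * g k))) = s * (a * (\<Sum>k\<in>K. v k * f k) + b * (\<Sum>k\<in>K. v k * g k))"
  for v f g :: "nat \<Rightarrow> real"
  by (simp add: distrib_left sum.distrib sum_distrib_left mult_ac)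

lemma h_rec:
  assumes st: "is_stationary_law \<alpha> \<beta> n v" and n: "n \<ge> 1"
    and ab: "0 \<le> \<alpha>" "\<alpha> < 1" "0 < \<beta>" "\<beta> < 1" and m: "m \<ge> 1"
  shows "hm v n m = (1-\<beta>)^m * ((1 - real m / real n) * hm v n m
           + (1-\<alpha>) * (1 - real (m-1) / real n) * hm v n (m-1))"
proof -
  have eq: "\<And>j. j \<le> n \<Longrightarrow> v j = (\<Sum>k\<le>n. v k * pmf (count_step \<alpha> \<beta> n k) j)"
    using st by (auto simp: is_stationary_law_def)
  have "hm v n m = (\<Sum>j\<le>n. (\<Sum>k\<le>n. v k * pmf (count_step \<alpha> \<beta> n k) j) * real (j choose m))"
    unfolding hm_def by (rule sum.cong) (auto simp: eq[symmetric])
  also have "\<dots> = (\<Sum>k\<le>n. v k * (\<Sum>j\<le>n. pmf (count_step \<alpha> \<beta> n k) j * real (j choose m)))"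
  proof -
    have "(\<Sum>j\<le>n. (\<Sum>k\<le>n. v k * pmf (count_step \<alpha> \<beta> n k) j) * real (j choose m))
        = (\<Sum>j\<le>n. \<Sum>k\<le>n. v k * (pmf (count_step \<alpha> \<beta> n k) j * real (j choose m)))"
      by (simp add: sum_distrib_right mult.assoc)
    also have "\<dots> = (\<Sum>k\<le>n. \<Sum>j\<le>n. v k * (pmf (count_step \<alpha> \<beta> n k) j * real (j choose m)))"
      by (rule sum.swap)
    finally show ?thesis by (simp add: sum_distrib_left)
  qed
  also have "\<dots> = (\<Sum>k\<le>n. v k * ((1-\<beta>)^m * ((1 - real m / real n) * real (k choose m)
         + (1-\<alpha>) * (1 - real (m-1) / real n) * real (k choose (m-1)))))"
    by (rule sum.cong[OF refl]) (simp add: step_moment[OF n _ ab m])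
  also have "\<dots> = (1-\<beta>)^m * ((1 - real m / real n) * hm v n m
           + (1-\<alpha>) * (1 - real (m-1) / real n) * hm v n (m-1))"
    unfolding hm_def by (rule lin_sum)
  finally show ?thesis .
qed

lemma h0: assumes "is_stationary_law \<alpha> \<beta> n v" shows "hm v n 0 = 1"
proof -
  have "(\<Sum>j\<le>n. v j) = 1" using assms unfolding is_stationary_law_def by blast
  then show ?thesis by (simp add: hm_def)
qed

definition Dp :: "real \<Rightarrow> nat \<Rightarrow> nat \<Rightarrow> real" where
  "Dp S n m = (\<Prod>i<m. 1 - S^(i+1) * (1 - real (i+1) / real n))"

lemma tri_Suc: "(Suc m * (Suc m + 1)) div 2 = m * (m + 1) div 2 + Suc m"
proof -
  have "Suc m * (Suc m + 1) = m * (m + 1) + 2 * Suc m" by (simp add: algebra_simps)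
  then show ?thesis by simp
qed

lemma wgt_Suc: "wgt \<alpha> \<beta> n (Suc m) = wgt \<alpha> \<beta> n m * (real (n - m) / real n) * (1-\<alpha>) * (1-\<beta>)^(Suc m)"
proof -
  have e: "(1-\<beta>)^(Suc m*(Suc m+1) div 2) = (1-\<beta>)^(m*(m+1) div 2) * (1-\<beta>)^Suc m"
    by (simp only: tri_Suc power_add)
  show ?thesis unfolding wgt_def e by (simp only: prod.lessThan_Suc power_Suc) (simp add: field_simps)
qed

lemma h_closed:
  assumes st: "is_stationary_law \<alpha> \<beta> n v" and n: "n \<ge> 1"
    and ab: "0 \<le> \<alpha>" "\<alpha> < 1" "0 < \<beta>" "\<beta> < 1"
  shows "m \<le> n \<Longrightarrow> hm v n m * Dp (1-\<beta>) n m = wgt \<alpha> \<beta> n m"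
proof (induction m)
  case 0
  then show ?case using h0[OF st] by (simp add: Dp_def wgt_def)
next
  case (Suc m)
  define S where "S = 1 - \<beta>"
  define Q where "Q = 1 - \<alpha>"
  have IH: "hm v n m * Dp S n m = wgt \<alpha> \<beta> n m" using Suc by (simp add: S_def)
  have r: "hm v n (Suc m) = S^(Suc m) * ((1 - real (Suc m) / real n) * hm v n (Suc m)
           + Q * (1 - real m / real n) * hm v n m)"
    using h_rec[OF st n ab, of "Suc m"] by (simp add: S_def Q_def)
  have r2: "hm v n (Suc m) * (1 - S^(Suc m) * (1 - real (Suc m) / real n)) = S^(Suc m) * Q * (1 - real m / real n) * hm v n m"
    using r by (simp add: algebra_simps)
  have Dsuc: "Dp S n (Suc m) = Dp S n m * (1 - S^(Suc m) * (1 - real (Suc m) / real n))"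
    by (simp add: Dp_def)
  have nm: "1 - real m / real n = real (n - m) / real n" using Suc.prems n by (simp add: of_nat_diff field_simps)
  have "hm v n (Suc m) * Dp S n (Suc m) = Dp S n m * (hm v n (Suc m) * (1 - S^(Suc m) * (1 - real (Suc m) / real n)))"
    unfolding Dsuc by (simp only: mult_ac)
  also have "\<dots> = Dp S n m * (S^(Suc m) * Q * (1 - real m / real n) * hm v n m)"
    by (simp only: r2)
  also have "\<dots> = wgt \<alpha> \<beta> n m * (real (n - m) / real n) * Q * S^(Suc m)"
    unfolding nm IH[symmetric] by (simp only: mult_ac)
  also have "\<dots> = wgt \<alpha> \<beta> n (Suc m)" by (simp add: wgt_Suc S_def Q_def)
  finally show ?case by (simp add: S_def)
qed



definition Pp :: "real \<Rightarrow> nat \<Rightarrow> real" where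
  "Pp S m = (\<Prod>i<m. 1 - S^(i+1))"

lemma Spow: fixes S :: real assumes "0 < S" "S < 1" shows "S * S^i < 1"
  using power_Suc_less_one[OF assms, of i] by simp

lemma qp_conv:
  fixes S :: real assumes S: "0 < S" "S < 1"
  shows "convergent_prod (\<lambda>r. 1 - S^(r+1))"
proof -
  have "summable (\<lambda>k. S * S^k)" using S by (intro summable_mult summable_geometric) simp
  then have "summable (\<lambda>k. abs (-(S^(k+1))))" using S by simp
  moreover have "\<And>k. -(S^(k+1)) \<noteq> -1"
    using Spow[OF S] by (metis add.commute neg_equal_iff_equal power_Suc less_irrefl Suc_eq_plus1)
  ultimately have "convergent_prod (\<lambda>k. 1 + -(S^(k+1)))"
    by (rule summable_imp_convergent_prod_real)
  then show ?thesis by simp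
qed

lemma P_lim:
  fixes S :: real assumes S: "0 < S" "S < 1"
  shows "Pp S \<longlonglongrightarrow> qpoch_inf S"
proof -
  have "(\<lambda>N. \<Prod>i\<le>N. 1 - S^(i+1)) \<longlonglongrightarrow> qpoch_inf S"
    unfolding qpoch_inf_def by (rule convergent_prod_LIMSEQ[OF qp_conv[OF S]])
  then have "(\<lambda>N. Pp S (Suc N)) \<longlonglongrightarrow> qpoch_inf S"
    by (simp add: Pp_def lessThan_Suc_atMost)
  then show ?thesis by (rule LIMSEQ_imp_Suc)
qed

lemma P_nonneg: fixes S :: real assumes S: "0 < S" "S < 1" shows "0 < Pp S m"
  unfolding Pp_def using S by (intro prod_pos) (simp add: Spow)

lemma P_le1: fixes S :: real assumes S: "0 < S" "S < 1" shows "Pp S m \<le> 1"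
  unfolding Pp_def using S by (intro prod_le_1) (auto simp: Spow less_imp_le)

lemma P_dec: fixes S :: real assumes S: "0 < S" "S < 1" shows "decseq (Pp S)"
proof (rule decseq_SucI)
  fix m
  have "Pp S (Suc m) = Pp S m * (1 - S^(m+1))" by (simp add: Pp_def)
  also have "\<dots> \<le> Pp S m * 1"
    using P_nonneg[OF S, of m] S by (intro mult_left_mono) auto
  finally show "Pp S (Suc m) \<le> Pp S m" by simp
qed

lemma q_le_P: fixes S :: real assumes S: "0 < S" "S < 1" shows "qpoch_inf S \<le> Pp S m"
  by (rule decseq_ge[OF P_dec[OF S] P_lim[OF S]])

lemma q_pos: fixes S :: real assumes S: "0 < S" "S < 1" shows "0 < qpoch_inf S"
proof -
  have "qpoch_inf S \<noteq> 0" unfolding qpoch_inf_def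
    by (rule prodinf_nonzero[OF qp_conv[OF S]]) (use S in \<open>simp add: Spow less_imp_neq\<close>)
  moreover have "0 \<le> qpoch_inf S"
    by (rule LIMSEQ_le_const[OF P_lim[OF S]]) (use P_nonneg[OF S] less_imp_le in blast)
  ultimately show ?thesis by simp
qed

lemma factor_bounds:
  fixes S :: real assumes S: "0 < S" "S < 1" and i: "i < n"
  shows "1 - S^(i+1) \<le> 1 - S^(i+1) * (1 - real (i+1) / real n)"
    and "1 - S^(i+1) * (1 - real (i+1) / real n) \<le> 1"
    and "0 < 1 - S^(i+1) * (1 - real (i+1) / real n)"
proof -
  have a: "0 \<le> 1 - real (i+1) / real n" "1 - real (i+1) / real n \<le> 1" using i by auto
  have b: "0 < S^(i+1)" "S^(i+1) < 1" using S Spow[OF S, of i] by auto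
  have "S^(i+1) * (1 - real (i+1) / real n) \<le> S^(i+1)" using a b by (simp add: mult_left_le)
  moreover have "0 \<le> S^(i+1) * (1 - real (i+1) / real n)" using a b by simp
  ultimately show "1 - S^(i+1) \<le> 1 - S^(i+1) * (1 - real (i+1) / real n)"
    "1 - S^(i+1) * (1 - real (i+1) / real n) \<le> 1"
    "0 < 1 - S^(i+1) * (1 - real (i+1) / real n)" using b by linarith+
qed

lemma D_bounds:
  fixes S :: real assumes S: "0 < S" "S < 1" and m: "m \<le> n"
  shows "Pp S m \<le> Dp S n m" "Dp S n m \<le> 1" "0 < Dp S n m"
proof -
  show "Pp S m \<le> Dp S n m" unfolding Pp_def Dp_def
    using factor_bounds[OF S] m S by (intro prod_mono) (auto simp: Spow less_imp_le)
  show "Dp S n m \<le> 1" unfolding Dp_def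
    using factor_bounds[OF S] m by (intro prod_le_1) (auto simp: less_imp_le)
  show "0 < Dp S n m" unfolding Dp_def
    using factor_bounds[OF S] m by (intro prod_pos) auto
qed

lemma D_anti:
  fixes S :: real assumes S: "0 < S" "S < 1" and mm: "m \<le> m'" and m': "m' \<le> n"
  shows "Dp S n m' \<le> Dp S n m"
  using mm m'
proof (induction m' rule: dec_induct)
  case base then show ?case by simp
next
  case (step j)
  have "Dp S n (Suc j) = Dp S n j * (1 - S^(j+1) * (1 - real (j+1) / real n))" by (simp add: Dp_def)
  also have "\<dots> \<le> Dp S n j * 1"
    using factor_bounds[OF S, of j n] D_bounds(3)[OF S, of j n] step by (intro mult_left_mono) auto
  finally show ?case using step by simp
qed

lemma D_lim:
  fixes S :: real
  shows "(\<lambda>n. Dp S n m) \<longlonglongrightarrow> Pp S m"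
  unfolding Dp_def Pp_def
proof (rule tendsto_prod)
  fix i
  have "(\<lambda>n. 1 - S^(i+1) * (1 - real (i+1) / real n)) \<longlonglongrightarrow> 1 - S^(i+1) * (1 - 0)"
    by (intro tendsto_intros)
  then show "(\<lambda>n. 1 - S^(i+1) * (1 - real (i+1) / real n)) \<longlonglongrightarrow> 1 - S^(i+1)" by simp
qed

lemma Dnn_lim:
  fixes S :: real assumes S: "0 < S" "S < 1"
  shows "(\<lambda>n. Dp S n n) \<longlonglongrightarrow> qpoch_inf S"
proof (rule LIMSEQ_I)
  fix r :: real assume r: "0 < r"
  have r2: "0 < r/2" using r by simp
  have "\<forall>\<^sub>F m in sequentially. dist (Pp S m) (qpoch_inf S) < r/2"
    using P_lim[OF S] r2 by (rule tendstoD)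
  then obtain m where m: "dist (Pp S m) (qpoch_inf S) < r/2" unfolding eventually_sequentially by blast
  have "\<forall>\<^sub>F n in sequentially. dist (Dp S n m) (Pp S m) < r/2"
    using D_lim[of S m] r2 by (rule tendstoD)
  then obtain N where N: "\<And>n. n \<ge> N \<Longrightarrow> dist (Dp S n m) (Pp S m) < r/2"
    by (auto simp: eventually_sequentially)
  show "\<exists>no. \<forall>n\<ge>no. norm (Dp S n n - qpoch_inf S) < r"
  proof (intro exI allI impI)
    fix n assume n: "max N m \<le> n"
    have lo: "qpoch_inf S \<le> Dp S n n"
      using q_le_P[OF S, of n] D_bounds(1)[OF S, of n n] by simp
    have "Dp S n n \<le> Dp S n m" using D_anti[OF S, of m n n] n by simp
    also have "\<dots> < Pp S m + r/2" using N[of n] n unfolding dist_real_def abs_less_iff by auto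
    also have "\<dots> < qpoch_inf S + r" using m unfolding dist_real_def abs_less_iff by auto
    finally show "norm (Dp S n n - qpoch_inf S) < r" using lo by simp
  qed
qed



lemma hm_nonneg: assumes "is_stationary_law \<alpha> \<beta> n v" shows "0 \<le> hm v n m"
  using assms unfolding hm_def is_stationary_law_def by (auto intro!: sum_nonneg)

lemma v_le_h: assumes st: "is_stationary_law \<alpha> \<beta> n v" and k: "k \<le> n"
  shows "v k \<le> hm v n k"
proof -
  have "v k * real (k choose k) \<le> (\<Sum>j\<le>n. v j * real (j choose k))"
    by (rule member_le_sum) (use st k in \<open>auto simp: is_stationary_law_def\<close>)
  then show ?thesis by (simp add: hm_def)
qed

lemma choose_Suc_real: "real (Suc k) * real (j choose Suc k) = real (j - k) * real (j choose k)"
proof -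
  have "Suc k * (j choose Suc k) = j * ((j - 1) choose k)" by (rule binomial_absorption)
  also have "\<dots> = (j - k) * (j choose k)" by (rule binomial_absorb_comp[symmetric])
  finally show ?thesis by (metis of_nat_mult)
qed

lemma bonf: assumes st: "is_stationary_law \<alpha> \<beta> n v" and k: "k \<le> n"
  shows "hm v n k - real (k+1) * hm v n (k+1) \<le> v k"
proof -
  have nn: "\<And>j. j \<le> n \<Longrightarrow> 0 \<le> v j" using st by (auto simp: is_stationary_law_def)
  have "hm v n k - real (k+1) * hm v n (k+1) = (\<Sum>j\<le>n. v j * (real (j choose k) - real (k+1) * real (j choose (k+1))))"
    unfolding hm_def by (simp add: sum_distrib_left sum_subtractf algebra_simps)
  also have "\<dots> \<le> (\<Sum>j\<le>n. if j = k then v j else 0)"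
  proof (rule sum_mono)
    fix j assume j: "j \<in> {..n}"
    have e: "real (k+1) * real (j choose (k+1)) = real (j - k) * real (j choose k)"
      using choose_Suc_real[of k j] by simp
    show "v j * (real (j choose k) - real (k+1) * real (j choose (k+1))) \<le> (if j = k then v j else 0)"
    proof (cases "j = k")
      case True then show ?thesis by (simp add: binomial_eq_0)
    next
      case False
      show ?thesis
      proof (cases "j < k")
        case True then show ?thesis using e by (simp add: binomial_eq_0)
      next
        case False
        with \<open>j \<noteq> k\<close> have "real (j - k) \<ge> 1" by simp
        then have "1 * real (j choose k) \<le> real (j - k) * real (j choose k)"
          by (intro mult_right_mono) auto
        then have "real (j choose k) - real (j - k) * real (j choose k) \<le> 0"
          by linarith
        then show ?thesis using e \<open>j \<noteq> k\<close> nn j by (simp add: mult_nonneg_nonpos)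
      qed
    qed
  qed
  also have "\<dots> = v k" using k by simp
  finally show ?thesis .
qed

lemma h_ratio:
  assumes st: "is_stationary_law \<alpha> \<beta> n v" and n: "n \<ge> 1" and k: "k \<le> n"
    and ab: "0 \<le> \<alpha>" "\<alpha> < 1" "0 < \<beta>" "\<beta> < 1"
  shows "hm v n (k+1) * \<beta> \<le> (1-\<beta>)^(k+1) * hm v n k"
proof -
  define S where "S = 1 - \<beta>"
  define Q where "Q = 1 - \<alpha>"
  have S: "0 < S" "S < 1" using ab by (auto simp: S_def)
  have Q: "0 < Q" "Q \<le> 1" using ab by (auto simp: Q_def)
  have r: "hm v n (k+1) = S^(k+1) * ((1 - real (k+1) / real n) * hm v n (k+1) + Q * (1 - real k / real n) * hm v n k)"
    using h_rec[OF st n ab, of "k+1"] by (simp add: S_def Q_def)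
  have r2: "hm v n (k+1) * (1 - S^(k+1) * (1 - real (k+1) / real n)) = S^(k+1) * (Q * (1 - real k / real n)) * hm v n k"
    using r by (simp add: algebra_simps)
  have h0: "0 \<le> hm v n k" "0 \<le> hm v n (k+1)" using hm_nonneg[OF st] by auto
  have sp: "0 \<le> S^(k+1)" "S^(k+1) \<le> S" using S by (auto simp: power_le_one mult_left_le)
  have a1: "1 - real (k+1) / real n \<le> 1" by simp
  have "S^(k+1) * (1 - real (k+1) / real n) \<le> S^(k+1)" using sp(1) a1 by (simp add: mult_left_le)
  then have d: "1 - S \<le> 1 - S^(k+1) * (1 - real (k+1) / real n)" using sp by linarith
  have qk: "0 \<le> Q * (1 - real k / real n)" "Q * (1 - real k / real n) \<le> 1"
    using Q k n by (auto simp: mult_le_one)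
  have "hm v n (k+1) * (1 - S) \<le> hm v n (k+1) * (1 - S^(k+1) * (1 - real (k+1) / real n))"
    using h0(2) d by (intro mult_left_mono)
  also have "\<dots> = S^(k+1) * (Q * (1 - real k / real n)) * hm v n k" by (rule r2)
  also have "\<dots> \<le> S^(k+1) * 1 * hm v n k"
    using qk sp h0 by (intro mult_right_mono mult_left_mono) auto
  finally show ?thesis by (simp add: S_def)
qed



lemma prod_fact: "(\<Prod>i<n. real (n - i)) = fact n"
proof -
  have "fact n = (of_nat (\<Prod>i = 0..<n. n - i) :: real)" by (rule fact_prod_rev)
  then show ?thesis by (simp add: atLeast0LessThan)
qed

lemma hm_top: assumes "n \<ge> 1" shows "hm v n n = v n"
proof -
  have "hm v n n = (\<Sum>j\<le>n. if j = n then v j else 0)"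
    unfolding hm_def by (rule sum.cong) (auto simp: binomial_eq_0)
  then show ?thesis by simp
qed

theorem mainTheorem16:
  fixes \<alpha> \<beta> :: real and \<nu> :: "nat \<Rightarrow> nat \<Rightarrow> real"
  assumes "0 \<le> \<alpha>" "\<alpha> < 1" "0 < \<beta>" "\<beta> < 1"
    and stat: "\<And>n. n \<ge> 1 \<Longrightarrow> is_stationary_law \<alpha> \<beta> n (\<nu> n)"
  shows "(\<exists>c C :: real. \<exists>M :: nat. 0 < c \<and> c < C \<and>
           (\<exists>N. \<forall>n\<ge>N. \<forall>k. M \<le> k \<and> k \<le> n \<longrightarrow>
              c * wgt \<alpha> \<beta> n k \<le> \<nu> n k \<and> \<nu> n k \<le> C * wgt \<alpha> \<beta> n k)) \<and>
         ((\<lambda>n. \<nu> n n) \<sim>[at_top]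
           (\<lambda>n. 1 / qpoch_inf (1 - \<beta>) * (fact n / real n ^ n) *
                (1 - \<alpha>) ^ n * (1 - \<beta>) ^ (n * (n + 1) div 2)))"
proof -
  note ab = assms(1-4)
  define S where "S = 1 - \<beta>"
  have S: "0 < S" "S < 1" using ab by (auto simp: S_def)
  define q where "q = qpoch_inf S"
  have qpos: "0 < q" unfolding q_def by (rule q_pos[OF S])
  have q1: "q \<le> 1" using q_le_P[OF S, of 0] by (simp add: q_def Pp_def)
  have lim: "(\<lambda>k. real k * S^k) \<longlonglongrightarrow> 0"
    using powser_times_n_limit_0[of S] S by simp
  have b2: "0 < \<beta>/2" using ab by simp
  obtain M where M: "\<And>k. k \<ge> M \<Longrightarrow> real k * S^k \<le> \<beta>/2"
  proof -
    have "\<forall>\<^sub>F k in sequentially. dist (real k * S^k) 0 < \<beta>/2"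
      using lim b2 by (rule tendstoD)
    then obtain M where "\<And>k. k \<ge> M \<Longrightarrow> dist (real k * S^k) 0 < \<beta>/2"
      unfolding eventually_sequentially by blast
    then show ?thesis using that by (force simp: dist_real_def)
  qed
  have part1: "\<forall>n\<ge>1. \<forall>k. M \<le> k \<and> k \<le> n \<longrightarrow>
              1/2 * wgt \<alpha> \<beta> n k \<le> \<nu> n k \<and> \<nu> n k \<le> 1/q * wgt \<alpha> \<beta> n k"
  proof (intro allI impI)
    fix n k assume n: "1 \<le> n" and kk: "M \<le> k \<and> k \<le> n"
    then have k: "k \<le> n" and Mk: "M \<le> k" by auto
    note st = stat[OF n]
    define D where "D = Dp S n k"
    have Dq: "q \<le> D" using q_le_P[OF S, of k] D_bounds(1)[OF S k] by (simp add: q_def D_def)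
    have D1: "D \<le> 1" and D0: "0 < D" using D_bounds(2,3)[OF S k] by (auto simp: D_def)
    have hc: "hm (\<nu> n) n k * D = wgt \<alpha> \<beta> n k"
      using h_closed[OF st n ab k] by (simp add: D_def S_def)
    have h0: "0 \<le> hm (\<nu> n) n k" by (rule hm_nonneg[OF st])
    have h1: "0 \<le> hm (\<nu> n) n (k+1)" by (rule hm_nonneg[OF st])
    have w0: "0 \<le> wgt \<alpha> \<beta> n k" using hc h0 D0 by (metis mult_nonneg_nonneg less_imp_le)
    have hw: "hm (\<nu> n) n k = wgt \<alpha> \<beta> n k / D" using hc D0 by (simp add: field_simps)
    have up: "\<nu> n k \<le> 1/q * wgt \<alpha> \<beta> n k"
    proof -
      have "\<nu> n k \<le> hm (\<nu> n) n k" by (rule v_le_h[OF st k])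
      also have "\<dots> = wgt \<alpha> \<beta> n k / D" by (rule hw)
      also have "\<dots> \<le> wgt \<alpha> \<beta> n k / q" using Dq qpos w0 by (intro divide_left_mono) auto
      finally show ?thesis by simp
    qed
    have hwl: "wgt \<alpha> \<beta> n k \<le> hm (\<nu> n) n k"
      using hc D1 h0 by (metis mult_left_le)
    have hr: "hm (\<nu> n) n (k+1) * \<beta> \<le> S^(k+1) * hm (\<nu> n) n k"
      using h_ratio[OF st n k ab] by (simp add: S_def)
    have Mk1: "real (k+1) * S^(k+1) \<le> \<beta>/2" using M[of "k+1"] Mk by simp
    have "real (k+1) * hm (\<nu> n) n (k+1) * \<beta> \<le> real (k+1) * (S^(k+1) * hm (\<nu> n) n k)"
      using hr by (simp add: mult.assoc mult_left_mono)
    also have "\<dots> = (real (k+1) * S^(k+1)) * hm (\<nu> n) n k" by (simp add: mult_ac)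
    also have "\<dots> \<le> \<beta>/2 * hm (\<nu> n) n k" using Mk1 h0 by (rule mult_right_mono)
    finally have "real (k+1) * hm (\<nu> n) n (k+1) * \<beta> \<le> hm (\<nu> n) n k / 2 * \<beta>" by (simp add: mult.commute)
    then have t: "real (k+1) * hm (\<nu> n) n (k+1) \<le> hm (\<nu> n) n k / 2"
      using ab by (simp only: mult_le_cancel_right_pos)
    have lo: "1/2 * wgt \<alpha> \<beta> n k \<le> \<nu> n k"
      using bonf[OF st k] t hwl by linarith
    show "1/2 * wgt \<alpha> \<beta> n k \<le> \<nu> n k \<and> \<nu> n k \<le> 1/q * wgt \<alpha> \<beta> n k"
      using lo up by simp
  qed
  have cC: "(1::real)/2 < 1/q" using qpos q1 by (simp add: field_simps)
  have P1: "\<exists>c C :: real. \<exists>M :: nat. 0 < c \<and> c < C \<and>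
           (\<exists>N. \<forall>n\<ge>N. \<forall>k. M \<le> k \<and> k \<le> n \<longrightarrow>
              c * wgt \<alpha> \<beta> n k \<le> \<nu> n k \<and> \<nu> n k \<le> C * wgt \<alpha> \<beta> n k)"
    using part1 cC by (intro exI[of _ "1/2"] exI[of _ "1/q"] exI[of _ M]) auto
  define g where "g n = 1 / qpoch_inf (1 - \<beta>) * (fact n / real n ^ n) *
                (1 - \<alpha>) ^ n * (1 - \<beta>) ^ (n * (n + 1) div 2)" for n :: nat
  have eqv: "\<nu> n n / g n = q / Dp S n n" if n: "n \<ge> 1" for n
  proof -
    note st = stat[OF n]
    have hc: "\<nu> n n * Dp S n n = wgt \<alpha> \<beta> n n"
      using h_closed[OF st n ab order_refl] hm_top[OF n] by (simp add: S_def)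
    have wg: "wgt \<alpha> \<beta> n n = q * g n"
      using qpos unfolding wgt_def prod_fact by (simp add: g_def q_def S_def)
    have gpos: "0 < g n" unfolding g_def using qpos ab S n by (simp add: q_def S_def)
    have D0: "0 < Dp S n n" using D_bounds(3)[OF S order_refl] .
    show ?thesis using hc wg gpos D0 by (simp add: field_simps)
  qed
  have "(\<lambda>n. q / Dp S n n) \<longlonglongrightarrow> q / q"
    by (intro tendsto_divide tendsto_const) (use Dnn_lim[OF S] qpos in \<open>auto simp: q_def\<close>)
  then have "(\<lambda>n. q / Dp S n n) \<longlonglongrightarrow> 1" using qpos by simp
  then have "(\<lambda>n. \<nu> n n / g n) \<longlonglongrightarrow> 1"
  proof (rule Lim_transform_eventually)
    show "\<forall>\<^sub>F n in sequentially. q / Dp S n n = \<nu> n n / g n"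
      unfolding eventually_sequentially using eqv by (metis)
  qed
  then have "(\<lambda>n. \<nu> n n) \<sim>[at_top] g" by (intro asymp_equivI') simp
  then show ?thesis using P1 unfolding g_def[abs_def] by blast
qed

end
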